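(* Let $G=(\Sigma,S,s_0,\delta)$ be a regular commutative grammar and let $K\in\mathbb{N}^\Sigma$. Then $K\in\mathrm{out}(G)$ if and only if there exist a run $D$ of $G$ with $\|D\| = O(|S|^{2|\Sigma|}\,|\Sigma|!)$ (the implicit constant being independent of $G$ and $K$), and simple cycles $C_1,\ldots,C_m\in\mathcal{C}_{\mathrm{supp}(D)}$ such that $C_1,\ldots,C_m$ are linearly independent and $K=\mathrm{out}(D)+\sum_{i=1}^m \alpha^i\,\mathrm{out}(C_i)$ for some $\alpha^1,\ldots,\alpha^m\in\mathbb{N}$.
   Context: For a finite set $X$, elements of $\mathbb{N}^X$ are multisets over $X$; for $v\in\mathbb{Q}^X$, $|v|=\sum_{x}|v(x)|$ and $\|v\|=\max_x|v(x)|$. A commutative grammar is $G=(\Sigma,S,s_0,\delta)$ where $\Sigma$ is a finite alphabet, $S$ a finite set of states, $s_0\in S$ the initial state, and $\delta\subseteq S\times\mathbb{N}^\Sigma\times\mathbb{N}^S$ a finite set of transitions; a transition $\tau=(s,a,t)$ has $\mathrm{source}(\tau)=s$, $\mathrm{out}(\tau)=a$, $\mathrm{target}(\tau)=t$. It is assumed that every state is the source of some transition and that every transition satisfies $|a|\le 1$, $|t|\le 2$. The grammar is regular if $|t|\le 1$ for every transition. For $D\in\mathbb{N}^\delta$: $\mathrm{source}(D)(s)=\sum_{\tau:\mathrm{source}(\tau)=s}D(\tau)$, $\mathrm{out}(D)=\sum_\tau D(\tau)\mathrm{out}(\tau)$, $\mathrm{target}(D)=\sum_\tau D(\tau)\mathrm{target}(\tau)$,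 and $\mathrm{supp}(D)=\{s\in S:\mathrm{source}(D)(s)>0\}$. $D$ is connected from $s$ if for every $t\in\mathrm{supp}(D)$, either $t=s$ or there are transitions $\tau_1,\ldots,\tau_m$ with $D(\tau_i)>0$, $\mathrm{source}(\tau_1)=s$, $\mathrm{source}(\tau_{i+1})\in\mathrm{target}(\tau_i)$ and $t\in\mathrm{target}(\tau_m)$. $D$ is a cycle from $s$ if it is connected from $s$ and $\mathrm{source}(D)=\mathrm{target}(D)$; $D$ is a run if it is connected from $s_0$ and $\mathrm{source}(D)=\mathrm{target}(D)+\{s_0\}$. $\mathrm{out}(G)=\{\mathrm{out}(D): D \text{ a run of } G\}$. A simple cycle is a nonzero cycle that cannot be written as a sum of smaller nonzero cycles; $\mathcal{C}_s$ is the set of simple cycles from $s$, and $\mathcal{C}_T=\bigcup_{s\in T}\mathcal{C}_s$ for $T\subseteq S$. *)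

theory Defs
  imports Complex_Main "HOL-Library.Multiset"
begin

text \<open>Alphabet symbols and states are natural numbers (every finite grammar is
isomorphic to one of this form; fixing the types makes the constant in the
O-bound genuinely independent of the grammar).  Elements of N^X are multisets.\<close>

type_synonym trans = "nat \<times> nat multiset \<times> nat multiset"

definition src :: "trans \<Rightarrow> nat" where "src \<tau> = fst \<tau>"
definition outp :: "trans \<Rightarrow> nat multiset" where "outp \<tau> = fst (snd \<tau>)"
definition tgt :: "trans \<Rightarrow> nat multiset" where "tgt \<tau> = snd (snd \<tau>)"

definition comm_grammar ::
  "nat set \<Rightarrow> nat set \<Rightarrow> nat \<Rightarrow> trans set \<Rightarrow> bool" where
  "comm_grammar \<Sigma> S s0 \<delta> \<longleftrightarrow>
     finite \<Sigma> \<and> finite S \<and> s0 \<in> S \<and> finite \<delta> \<and>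
     (\<forall>\<tau>\<in>\<delta>. src \<tau> \<in> S \<and> set_mset (outp \<tau>) \<subseteq> \<Sigma> \<and> set_mset (tgt \<tau>) \<subseteq> S
            \<and> size (outp \<tau>) \<le> 1 \<and> size (tgt \<tau>) \<le> 2) \<and>
     (\<forall>s\<in>S. \<exists>\<tau>\<in>\<delta>. src \<tau> = s)"

definition regular_grammar ::
  "nat set \<Rightarrow> nat set \<Rightarrow> nat \<Rightarrow> trans set \<Rightarrow> bool" where
  "regular_grammar \<Sigma> S s0 \<delta> \<longleftrightarrow>
     comm_grammar \<Sigma> S s0 \<delta> \<and> (\<forall>\<tau>\<in>\<delta>. size (tgt \<tau>) \<le> 1)"

text \<open>D in N^delta is a multiset of transitions with set_mset D contained in delta.\<close>

definition source_of :: "trans multiset \<Rightarrow> nat multiset" where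
  "source_of D = image_mset src D"

definition out_of :: "trans multiset \<Rightarrow> nat multiset" where
  "out_of D = \<Sum>\<^sub># (image_mset outp D)"

definition target_of :: "trans multiset \<Rightarrow> nat multiset" where
  "target_of D = \<Sum>\<^sub># (image_mset tgt D)"

definition supp :: "trans multiset \<Rightarrow> nat set" where
  "supp D = set_mset (source_of D)"

definition mnorm :: "trans multiset \<Rightarrow> nat" where
  "mnorm D = Max (insert 0 (count D ` set_mset D))"

definition connected_from :: "trans multiset \<Rightarrow> nat \<Rightarrow> bool" where
  "connected_from D s \<longleftrightarrow>
     (\<forall>t\<in>supp D. t = s \<or>
        (\<exists>taus. taus \<noteq> [] \<and> (\<forall>\<tau>\<in>set taus. \<tau> \<in># D) \<and> src (hd taus) = s \<and>
           (\<forall>i. Suc i < length taus \<longrightarrow> src (taus ! Suc i) \<in># tgt (taus ! i)) \<and>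
           t \<in># tgt (last taus)))"

definition cycle_from :: "trans set \<Rightarrow> trans multiset \<Rightarrow> nat \<Rightarrow> bool" where
  "cycle_from \<delta> D s \<longleftrightarrow> set_mset D \<subseteq> \<delta> \<and> connected_from D s \<and> source_of D = target_of D"

definition is_cycle :: "trans set \<Rightarrow> trans multiset \<Rightarrow> bool" where
  "is_cycle \<delta> D \<longleftrightarrow> (\<exists>s. cycle_from \<delta> D s)"

definition simple_cycle :: "trans set \<Rightarrow> trans multiset \<Rightarrow> bool" where
  "simple_cycle \<delta> C \<longleftrightarrow> C \<noteq> {#} \<and> is_cycle \<delta> C \<and>
     \<not> (\<exists>Cs. (\<forall>C'\<in>set Cs. C' \<noteq> {#} \<and> is_cycle \<delta> C' \<and> C' \<subset># C) \<and> sum_list Cs = C)"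

definition simple_cycles_from :: "trans set \<Rightarrow> nat set \<Rightarrow> trans multiset set" where
  "simple_cycles_from \<delta> T = {C. \<exists>s\<in>T. simple_cycle \<delta> C \<and> cycle_from \<delta> C s}"

definition is_run :: "trans set \<Rightarrow> nat \<Rightarrow> trans multiset \<Rightarrow> bool" where
  "is_run \<delta> s0 D \<longleftrightarrow> set_mset D \<subseteq> \<delta> \<and> connected_from D s0 \<and>
     source_of D = target_of D + {#s0#}"

definition out_lang :: "trans set \<Rightarrow> nat \<Rightarrow> nat multiset set" where
  "out_lang \<delta> s0 = {out_of D | D. is_run \<delta> s0 D}"

definition lin_indep :: "trans multiset list \<Rightarrow> bool" where
  "lin_indep Cs \<longleftrightarrow>
     (\<forall>c :: nat \<Rightarrow> rat.
        (\<forall>\<tau>. (\<Sum>i<length Cs. c i * of_nat (count (Cs ! i) \<tau>)) = 0) \<longrightarrow>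
        (\<forall>i<length Cs. c i = 0))"

end

theory Submission
  imports Defs "HOL-Library.Function_Algebras"
begin

lemma source_of_plus[simp]: "source_of (A + B) = source_of A + source_of B"
  by (simp add: source_of_def)
lemma target_of_plus[simp]: "target_of (A + B) = target_of A + target_of B"
  by (simp add: target_of_def)
lemma out_of_plus[simp]: "out_of (A + B) = out_of A + out_of B"
  by (simp add: out_of_def)
lemma source_of_empty[simp]: "source_of {#} = {#}" by (simp add: source_of_def)
lemma target_of_empty[simp]: "target_of {#} = {#}" by (simp add: target_of_def)
lemma out_of_empty[simp]: "out_of {#} = {#}" by (simp add: out_of_def)
lemma source_of_add[simp]: "source_of (add_mset x A) = add_mset (src x) (source_of A)"
  by (simp add: source_of_def)
lemma target_of_add[simp]: "target_of (add_mset x A) = tgt x + target_of A"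
  by (simp add: target_of_def)
lemma out_of_add[simp]: "out_of (add_mset x A) = outp x + out_of A"
  by (simp add: out_of_def)

lemma out_of_repeat[simp]: "out_of (repeat_mset n C) = repeat_mset n (out_of C)"
  by (induction n) auto
lemma source_of_repeat[simp]: "source_of (repeat_mset n C) = repeat_mset n (source_of C)"
  by (induction n) auto
lemma target_of_repeat[simp]: "target_of (repeat_mset n C) = repeat_mset n (target_of C)"
  by (induction n) auto

lemma out_of_sum: "out_of (\<Sum>i\<in>I. f i) = (\<Sum>i\<in>I. out_of (f i))"
  by (induction I rule: infinite_finite_induct) auto
lemma source_of_sum: "source_of (\<Sum>i\<in>I. f i) = (\<Sum>i\<in>I. source_of (f i))"
  by (induction I rule: infinite_finite_induct) auto
lemma target_of_sum: "target_of (\<Sum>i\<in>I. f i) = (\<Sum>i\<in>I. target_of (f i))"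
  by (induction I rule: infinite_finite_induct) auto

lemma source_target_sum_list:
  "(\<forall>C\<in>set Cs. source_of C = target_of C) \<Longrightarrow> source_of (sum_list Cs) = target_of (sum_list Cs)"
  by (induction Cs) auto

lemma size_source_of[simp]: "size (source_of A) = size A" by (simp add: source_of_def)

lemma size_target_le: "\<forall>\<tau>\<in>#A. size (tgt \<tau>) \<le> 1 \<Longrightarrow> size (target_of A) \<le> size A"
  by (induction A) auto

lemma set_out_of: "set_mset (out_of D) \<subseteq> (\<Union>\<tau>\<in>set_mset D. set_mset (outp \<tau>))"
  by (induction D) auto

lemma supp_eq: "supp D = src ` set_mset D"
  by (simp add: supp_def source_of_def)

lemma connected_from_cong:
  "set_mset D = set_mset D' \<Longrightarrow> connected_from D s \<Longrightarrow> connected_from D' s"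
  unfolding connected_from_def supp_eq by simp

lemma mnorm_le: "(\<forall>\<tau>. count D \<tau> \<le> b) \<Longrightarrow> mnorm D \<le> b"
  unfolding mnorm_def by (subst Max_le_iff) auto



definition E :: "trans multiset \<Rightarrow> (nat \<times> nat) set" where
  "E M = {(x, v). \<exists>\<tau>. \<tau> \<in># M \<and> src \<tau> = x \<and> v \<in># tgt \<tau>}"

lemma E_I: "\<tau> \<in># M \<Longrightarrow> v \<in># tgt \<tau> \<Longrightarrow> (src \<tau>, v) \<in> E M"
  unfolding E_def by blast

lemma E_D: "(x, v) \<in> E M \<Longrightarrow> \<exists>\<tau>. \<tau> \<in># M \<and> src \<tau> = x \<and> v \<in># tgt \<tau>"
  unfolding E_def by blast

definition chain :: "trans list \<Rightarrow> bool" where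
  "chain ws \<longleftrightarrow> (\<forall>i. Suc i < length ws \<longrightarrow> src (ws!Suc i) \<in># tgt (ws!i))"

definition pathm :: "trans multiset \<Rightarrow> trans list \<Rightarrow> nat \<Rightarrow> nat \<Rightarrow> bool" where
  "pathm M ws s t \<longleftrightarrow> ws \<noteq> [] \<and> set ws \<subseteq> set_mset M \<and> src (hd ws) = s \<and> chain ws \<and> t \<in># tgt (last ws)"

lemma connected_from_alt:
  "connected_from D s \<longleftrightarrow> (\<forall>t\<in>supp D. t = s \<or> (\<exists>ws. pathm D ws s t))"
  by (simp add: connected_from_def pathm_def chain_def subset_eq)

lemma tgt_single: "size (tgt \<tau>) \<le> 1 \<Longrightarrow> v \<in># tgt \<tau> \<Longrightarrow> tgt \<tau> = {#v#}"
proof -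
  assume a: "size (tgt \<tau>) \<le> 1" "v \<in># tgt \<tau>"
  then have "size (tgt \<tau>) = 1"
    by (metis One_nat_def Suc_leI antisym size_eq_0_iff_empty empty_iff neq0_conv set_mset_empty)
  then obtain a where "tgt \<tau> = {#a#}" using size_1_singleton_mset by blast
  with a show ?thesis by auto
qed

lemma chain_Cons: "chain (w#ws) \<longleftrightarrow> chain ws \<and> (ws \<noteq> [] \<longrightarrow> src (hd ws) \<in># tgt w)"
  unfolding chain_def
  apply (cases ws)
   apply simp
  apply (auto simp: nth_Cons split: nat.splits)
  done

lemma chain_snoc: "chain ws \<Longrightarrow> ws \<noteq> [] \<Longrightarrow> src x \<in># tgt (last ws) \<Longrightarrow> chain (ws @ [x])"
  unfolding chain_def
  apply (intro allI impI)
  subgoal for i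
    apply (cases "Suc i < length ws")
     apply (simp add: nth_append)
    apply (subgoal_tac "i = length ws - 1")
     apply (simp add: nth_append last_conv_nth)
    apply simp
    done
  done

lemma chain_append: "chain ws \<Longrightarrow> chain vs \<Longrightarrow> ws \<noteq> [] \<Longrightarrow> vs \<noteq> [] \<Longrightarrow>
   src (hd vs) \<in># tgt (last ws) \<Longrightarrow> chain (ws @ vs)"
  by (induction ws) (auto simp: chain_Cons hd_append)

lemma chain_take: "chain ws \<Longrightarrow> chain (take i ws)"
  unfolding chain_def by auto

lemma pathm_trancl: "pathm M ws s t \<Longrightarrow> (s,t) \<in> (E M)\<^sup>+"
proof (induction ws arbitrary: s)
  case Nil then show ?case by (simp add: pathm_def)
next
  case (Cons w ws)
  then have w: "w \<in># M" "src w = s" by (auto simp: pathm_def)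
  show ?case
  proof (cases ws)
    case Nil
    with Cons.prems have "t \<in># tgt w" by (simp add: pathm_def)
    with w have "(s,t) \<in> E M" using E_I by metis
    then show ?thesis by auto
  next
    case (Cons w' ws')
    with Cons.prems have "pathm M ws (src w') t" "src w' \<in># tgt w"
      by (auto simp: pathm_def chain_Cons)
    then have "(s, src w') \<in> E M" "(src w', t) \<in> (E M)\<^sup>+"
      using Cons.IH w E_I by metis+
    then show ?thesis by auto
  qed
qed

lemma pathm_append: "pathm M ws s t \<Longrightarrow> pathm M vs t u \<Longrightarrow> pathm M (ws @ vs) s u"
  unfolding pathm_def by (auto intro: chain_append)

lemma rtrancl_pathm:
  assumes "(s,t) \<in> (E M)\<^sup>*"
  shows "t = s \<or> (\<exists>ws. pathm M ws s t \<and> distinct (map src ws) \<and> t \<notin> set (map src ws))"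
  using assms
proof (induction rule: rtrancl_induct)
  case base then show ?case by simp
next
  case (step y z)
  from step.hyps(2) obtain \<tau> where tau: "\<tau> \<in># M" "src \<tau> = y" "z \<in># tgt \<tau>"
    by (auto simp: E_def)
  obtain ws' where ws': "pathm M ws' s z" "distinct (map src ws')"
  proof (cases "y = s")
    case True
    then show ?thesis using tau by (intro that[of "[\<tau>]"]) (auto simp: pathm_def chain_def)
  next
    case False
    with step.IH obtain ws where ws: "pathm M ws s y" "distinct (map src ws)" "y \<notin> set (map src ws)"
      by blast
    show ?thesis
      apply (rule that[of "ws @ [\<tau>]"])
      using ws tau by (auto simp: pathm_def intro!: chain_snoc)
  qed
  show ?case
  proof (cases "z \<in> set (map src ws')")
    case False then show ?thesis using ws' by blast
  next
    case True
    then obtain i where i: "i < length ws'" "z = src (ws'!i)"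
      by (metis in_set_conv_nth length_map nth_map)
    show ?thesis
    proof (cases i)
      case 0
      have "ws' \<noteq> []" "src (hd ws') = s" using ws' by (auto simp: pathm_def)
      then show ?thesis using i 0 by (simp add: hd_conv_nth)
    next
      case (Suc j)
      have ch: "chain ws'" using ws' by (simp add: pathm_def)
      have p: "pathm M (take i ws') s z"
        unfolding pathm_def
      proof (intro conjI)
        show "take i ws' \<noteq> []" using Suc i ws' by (auto simp: pathm_def)
        show "set (take i ws') \<subseteq> set_mset M" using ws' set_take_subset by (fastforce simp: pathm_def)
        show "src (hd (take i ws')) = s" using ws' Suc by (auto simp: pathm_def)
        show "chain (take i ws')" using ch chain_take by blast
        have "last (take i ws') = ws'!j" using Suc i by (subst last_conv_nth) (auto simp: min_def)
        moreover have "src (ws'!Suc j) \<in># tgt (ws'!j)" using ch Suc i by (simp add: chain_def)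
        ultimately show "z \<in># tgt (last (take i ws'))" using Suc i by simp
      qed
      have d: "distinct (map src (take i ws'))" using ws' by (simp add: take_map[symmetric])
      have "z \<notin> set (map src (take i ws'))"
      proof
        assume "z \<in> set (map src (take i ws'))"
        then obtain k where "k < i" "z = src (ws'!k)"
          using i by (auto simp: in_set_conv_nth)
        with i ws'(2) show False
          by (metis (no_types, lifting) distinct_conv_nth length_map less_trans nat_neq_iff nth_map)
      qed
      with p d show ?thesis by blast
    qed
  qed
qed

lemma pathm_balance:
  "(\<forall>\<tau>\<in>set ws. size (tgt \<tau>) \<le> 1) \<Longrightarrow> pathm M ws x y \<Longrightarrow>
    source_of (mset ws) + {#y#} = target_of (mset ws) + {#x#}"
proof (induction ws arbitrary: x)
  case Nil then show ?case by (simp add: pathm_def)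
next
  case (Cons w ws)
  show ?case
  proof (cases ws)
    case Nil
    with Cons.prems have "tgt w = {#y#}" "src w = x" by (auto simp: pathm_def intro: tgt_single)
    with Nil show ?thesis by simp
  next
    case (Cons w' ws')
    with Cons.prems have p: "pathm M ws (src w') y" "src w' \<in># tgt w" "src w = x"
      by (auto simp: pathm_def chain_Cons)
    then have "tgt w = {#src w'#}" using Cons.prems by (auto intro: tgt_single)
    with Cons.IH[OF _ p(1)] Cons.prems p(3) show ?thesis
      by (simp add: add.commute add.left_commute)
  qed
qed



lemma filter_all: "(\<forall>x\<in>#M. P x) \<Longrightarrow> filter_mset P M = M"
  by (induction M) auto

lemma filter_none: "(\<forall>x\<in>#M. \<not> P x) \<Longrightarrow> filter_mset P M = {#}"
  by (induction M) auto

lemma filter_source: "filter_mset P (source_of M) = source_of (filter_mset (\<lambda>\<tau>. P (src \<tau>)) M)"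
  unfolding source_of_def by (simp add: image_mset_filter_mset_swap)

lemma filter_target_closed:
  "\<forall>\<tau>\<in>#A. set_mset (tgt \<tau>) \<subseteq> R \<Longrightarrow> filter_mset (\<lambda>x. x \<in> R) (target_of A) = target_of A"
  by (induction A) (auto intro: filter_all)

lemma restrict_balance:
  assumes reg: "\<forall>\<tau>\<in>#M. size (tgt \<tau>) \<le> 1"
    and closed: "\<forall>\<tau>\<in>#M. src \<tau> \<in> R \<longrightarrow> set_mset (tgt \<tau>) \<subseteq> R"
    and eq: "source_of M = target_of M + Xs" and ex: "set_mset Xs \<subseteq> R"
  shows "source_of (filter_mset (\<lambda>\<tau>. src \<tau> \<in> R) M) = target_of (filter_mset (\<lambda>\<tau>. src \<tau> \<in> R) M) + Xs"
proof -
  define Mr where "Mr = filter_mset (\<lambda>\<tau>. src \<tau> \<in> R) M"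
  define Mo where "Mo = filter_mset (\<lambda>\<tau>. \<not> src \<tau> \<in> R) M"
  have M: "M = Mr + Mo" unfolding Mr_def Mo_def by (rule multiset_partition)
  define X where "X = filter_mset (\<lambda>x. x \<in> R) (target_of Mo)"
  have h2: "filter_mset (\<lambda>x. x \<in> R) (target_of Mr) = target_of Mr"
    using closed by (intro filter_target_closed) (auto simp: Mr_def)
  have h3: "filter_mset (\<lambda>x. x \<in> R) Xs = Xs" using ex by (intro filter_all) auto
  have "filter_mset (\<lambda>x. x \<in> R) (source_of M) = source_of Mr"
    by (simp add: filter_source Mr_def)
  also have "filter_mset (\<lambda>x. x \<in> R) (source_of M) = target_of Mr + X + Xs"
    unfolding eq X_def using h2 h3 M by simp
  finally have sr: "source_of Mr = target_of Mr + X + Xs" by simp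
  have "size M = size (target_of Mr) + size (target_of Mo) + size Xs"
    using eq M by (metis size_source_of size_union target_of_plus)
  moreover have "size Mr = size (target_of Mr) + size X + size Xs"
    using sr by (metis size_source_of size_union)
  moreover have "size M = size Mr + size Mo" using M by simp
  moreover have "size (target_of Mo) \<le> size Mo"
    using reg by (intro size_target_le) (auto simp: Mo_def)
  ultimately have "size X = 0" by linarith
  then have "X = {#}" by simp
  with sr show ?thesis by (simp add: Mr_def)
qed

lemma closed_walk:
  assumes reg: "\<forall>\<sigma>\<in>#A. size (tgt \<sigma>) \<le> 1"
    and tau: "\<tau> \<in># A" "v \<in># tgt \<tau>" and r: "(v, src \<tau>) \<in> (E A)\<^sup>*"
  shows "\<exists>B. B \<subseteq># mset_set (set_mset A) \<and> B \<noteq> {#} \<and> source_of B = target_of B"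
proof -
  have t1: "pathm A [\<tau>] (src \<tau>) v" using tau by (simp add: pathm_def chain_def)
  obtain cs where cs: "pathm A cs v v" "distinct (map src cs)"
  proof (cases "src \<tau> = v")
    case True
    then show ?thesis using t1 by (intro that[of "[\<tau>]"]) auto
  next
    case False
    with rtrancl_pathm[OF r] obtain ws where
      ws: "pathm A ws v (src \<tau>)" "distinct (map src ws)" "src \<tau> \<notin> set (map src ws)"
      by metis
    show ?thesis
      apply (rule that[of "ws @ [\<tau>]"])
      using pathm_append[OF ws(1) t1] ws by auto
  qed
  have sub: "set cs \<subseteq> set_mset A" using cs by (simp add: pathm_def)
  have "source_of (mset cs) + {#v#} = target_of (mset cs) + {#v#}"
    using pathm_balance[OF _ cs(1)] reg sub by auto
  then have bal: "source_of (mset cs) = target_of (mset cs)" by simp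
  have dc: "distinct cs" using cs(2) distinct_map by blast
  have "mset cs = mset_set (set cs)" using dc by (simp add: mset_set_set)
  also have "\<dots> \<subseteq># mset_set (set_mset A)" using sub by (intro subset_imp_msubset_mset_set) auto
  finally have "mset cs \<subseteq># mset_set (set_mset A)" .
  moreover have "mset cs \<noteq> {#}" using cs by (simp add: pathm_def)
  ultimately show ?thesis using bal by blast
qed

lemma rtrancl_restrict:
  assumes "(s,x) \<in> (E B)\<^sup>*"
  shows "(s,x) \<in> (E (filter_mset (\<lambda>\<tau>. (s, src \<tau>) \<in> (E B)\<^sup>*) B))\<^sup>*"
  using assms
proof (induction rule: rtrancl_induct)
  case base then show ?case by simp
next
  case (step y z)
  from E_D[OF step.hyps(2)] obtain \<sigma> where "\<sigma> \<in># B" "src \<sigma> = y" "z \<in># tgt \<sigma>" by blast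
  with step.hyps(1) have "(y,z) \<in> E (filter_mset (\<lambda>\<tau>. (s, src \<tau>) \<in> (E B)\<^sup>*) B)"
    using E_I[of \<sigma> "filter_mset (\<lambda>\<tau>. (s, src \<tau>) \<in> (E B)\<^sup>*) B" z] by auto
  with step.IH show ?case by simp
qed

lemma cycle_in_balanced:
  assumes reg: "\<forall>\<sigma>\<in>#B. size (tgt \<sigma>) \<le> 1" and sd: "set_mset B \<subseteq> \<delta>"
    and ne: "B \<noteq> {#}" and bal: "source_of B = target_of B"
  shows "\<exists>C. C \<subseteq># B \<and> C \<noteq> {#} \<and> is_cycle \<delta> C"
proof -
  obtain \<tau> where tau: "\<tau> \<in># B" using ne by fastforce
  define s where "s = src \<tau>"
  define R where "R = {x. (s,x) \<in> (E B)\<^sup>*}"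
  define Br where "Br = filter_mset (\<lambda>\<sigma>. src \<sigma> \<in> R) B"
  have closed: "\<forall>\<sigma>\<in>#B. src \<sigma> \<in> R \<longrightarrow> set_mset (tgt \<sigma>) \<subseteq> R"
  proof (intro ballI impI subsetI)
    fix \<sigma> v assume "\<sigma> \<in># B" "src \<sigma> \<in> R" "v \<in># tgt \<sigma>"
    then have "(src \<sigma>, v) \<in> E B" "(s, src \<sigma>) \<in> (E B)\<^sup>*" using E_I R_def by auto
    then show "v \<in> R" unfolding R_def by simp
  qed
  have bbal: "source_of Br = target_of Br"
    using restrict_balance[OF reg closed, of "{#}"] bal by (simp add: Br_def)
  have tBr: "\<tau> \<in># Br" using tau by (simp add: Br_def R_def s_def)
  have conn: "connected_from Br s"
    unfolding connected_from_alt
  proof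
    fix t assume "t \<in> supp Br"
    then obtain \<sigma> where "\<sigma> \<in># Br" "t = src \<sigma>" by (auto simp: supp_eq)
    then have "(s,t) \<in> (E B)\<^sup>*" by (simp add: Br_def R_def)
    then have "(s,t) \<in> (E Br)\<^sup>*" using rtrancl_restrict unfolding Br_def R_def by simp
    from rtrancl_pathm[OF this] show "t = s \<or> (\<exists>ws. pathm Br ws s t)" by blast
  qed
  have "cycle_from \<delta> Br s" unfolding cycle_from_def
    using conn bbal sd by (auto simp: Br_def)
  moreover have "Br \<noteq> {#}" using tBr by (metis empty_iff set_mset_empty)
  moreover have "Br \<subseteq># B" by (simp add: Br_def)
  ultimately show ?thesis unfolding is_cycle_def by blast
qed

lemma simple_exists:
  "C0 \<noteq> {#} \<Longrightarrow> is_cycle \<delta> C0 \<Longrightarrow> \<exists>C. C \<subseteq># C0 \<and> simple_cycle \<delta> C"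
proof (induction "size C0" arbitrary: C0 rule: less_induct)
  case less
  show ?case
  proof (cases "\<exists>C'. C' \<subset># C0 \<and> C' \<noteq> {#} \<and> is_cycle \<delta> C'")
    case True
    then obtain C' where C': "C' \<subset># C0" "C' \<noteq> {#}" "is_cycle \<delta> C'" by blast
    with less.hyps[of C'] mset_subset_size obtain C where "C \<subseteq># C'" "simple_cycle \<delta> C" by blast
    with C' show ?thesis by (metis subset_mset.less_imp_le subset_mset.order_trans)
  next
    case False
    have "simple_cycle \<delta> C0"
      unfolding simple_cycle_def
    proof (intro conjI)
      show "C0 \<noteq> {#}" "is_cycle \<delta> C0" using less.prems by auto
    next
      show "\<not> (\<exists>Cs. (\<forall>C'\<in>set Cs. C' \<noteq> {#} \<and> is_cycle \<delta> C' \<and> C' \<subset># C0) \<and> sum_list Cs = C0)"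
      proof
      assume "\<exists>Cs. (\<forall>C'\<in>set Cs. C' \<noteq> {#} \<and> is_cycle \<delta> C' \<and> C' \<subset># C0) \<and> sum_list Cs = C0"
      then obtain Cs where Cs: "\<forall>C'\<in>set Cs. C' \<noteq> {#} \<and> is_cycle \<delta> C' \<and> C' \<subset># C0" "sum_list Cs = C0"
        by blast
      show False
      proof (cases Cs)
        case Nil then show False using Cs less.prems by simp
      next
        case (Cons C' rest) then show False using Cs False by auto
      qed
      qed
    qed
    then show ?thesis by blast
  qed
qed

lemma cycle_from_src: "cycle_from \<delta> C s \<Longrightarrow> C \<noteq> {#} \<Longrightarrow> s \<in> supp C"
proof -
  assume cf: "cycle_from \<delta> C s" and ne: "C \<noteq> {#}"
  obtain \<sigma> where "\<sigma> \<in># C" using ne by fastforce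
  then have t: "src \<sigma> \<in> supp C" by (simp add: supp_eq)
  from cf have "connected_from C s" by (simp add: cycle_from_def)
  with t have "src \<sigma> = s \<or> (\<exists>ws. pathm C ws s (src \<sigma>))" unfolding connected_from_alt by blast
  then show ?thesis
  proof
    assume "\<exists>ws. pathm C ws s (src \<sigma>)"
    then obtain ws where "pathm C ws s (src \<sigma>)" by blast
    then have "hd ws \<in># C" "src (hd ws) = s" by (auto simp: pathm_def)
    then show ?thesis by (auto simp: supp_eq)
  qed (use t in simp)
qed

lemma filter_target_good:
  assumes reg: "\<forall>\<sigma>\<in>#A. size (tgt \<sigma>) \<le> 1"
    and bk: "\<forall>\<sigma>\<in>#A. \<forall>v\<in>#tgt \<sigma>. v \<in> U \<longrightarrow> src \<sigma> \<in> U"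
  shows "size (filter_mset (\<lambda>x. x \<in> U) (target_of A)) \<le>
         size (filter_mset (\<lambda>\<sigma>. src \<sigma> \<in> U \<and> (\<exists>v\<in>#tgt \<sigma>. v \<in> U)) A)"
  using assms
proof (induction A)
  case empty then show ?case by simp
next
  case (add \<sigma> A)
  have IH: "size (filter_mset (\<lambda>x. x \<in> U) (target_of A)) \<le>
         size (filter_mset (\<lambda>\<sigma>. src \<sigma> \<in> U \<and> (\<exists>v\<in>#tgt \<sigma>. v \<in> U)) A)"
    using add by auto
  show ?case
  proof (cases "\<exists>v\<in>#tgt \<sigma>. v \<in> U")
    case True
    then have "src \<sigma> \<in> U" using add.prems by auto
    moreover have "size (filter_mset (\<lambda>x. x \<in> U) (tgt \<sigma>)) \<le> 1"
      using add.prems(1) size_filter_mset_lesseq[of _ "tgt \<sigma>"] by (meson le_trans union_single_eq_member)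
    ultimately show ?thesis using IH True by simp
  next
    case False
    then have f0: "filter_mset (\<lambda>x. x \<in> U) (tgt \<sigma>) = {#}" by (intro filter_none) auto
    have "size (filter_mset (\<lambda>x. x \<in> U) (target_of (add_mset \<sigma> A))) = size (filter_mset (\<lambda>x. x \<in> U) (target_of A))"
      unfolding target_of_add filter_union_mset size_union f0 by simp
    moreover have "filter_mset (\<lambda>\<sigma>. src \<sigma> \<in> U \<and> (\<exists>v\<in>#tgt \<sigma>. v \<in> U)) (add_mset \<sigma> A) =
       filter_mset (\<lambda>\<sigma>. src \<sigma> \<in> U \<and> (\<exists>v\<in>#tgt \<sigma>. v \<in> U)) A" using False by simp
    ultimately show ?thesis using IH by (simp only:)
  qed
qed

lemma cut:
  assumes reg: "\<forall>\<sigma>\<in>#A. size (tgt \<sigma>) \<le> 1"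
    and acyc: "\<forall>\<sigma>\<in>#A. \<forall>v\<in>#tgt \<sigma>. (v, src \<sigma>) \<notin> (E A)\<^sup>*"
    and eq: "source_of A + N = target_of A + P"
  shows "count A \<tau> \<le> size P"
proof (cases "\<tau> \<in># A")
  case False then show ?thesis by (simp add: not_in_iff)
next
  case True
  define U where "U = {x. (x, src \<tau>) \<in> (E A)\<^sup>*}"
  have bk: "\<forall>\<sigma>\<in>#A. \<forall>v\<in>#tgt \<sigma>. v \<in> U \<longrightarrow> src \<sigma> \<in> U"
  proof (intro ballI impI)
    fix \<sigma> v assume "\<sigma> \<in># A" "v \<in># tgt \<sigma>" "v \<in> U"
    then have "(src \<sigma>, v) \<in> E A" "(v, src \<tau>) \<in> (E A)\<^sup>*" using E_I U_def by auto
    then show "src \<sigma> \<in> U" unfolding U_def by (meson converse_rtrancl_into_rtrancl mem_Collect_eq)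
  qed
  define Au where "Au = filter_mset (\<lambda>\<sigma>. src \<sigma> \<in> U) A"
  define good where "good = (\<lambda>\<sigma>. \<exists>v\<in>#tgt \<sigma>. v \<in> U)"
  have fg: "filter_mset (\<lambda>\<sigma>. src \<sigma> \<in> U \<and> (\<exists>v\<in>#tgt \<sigma>. v \<in> U)) A = filter_mset good Au"
    by (simp add: Au_def good_def filter_filter_mset)
  have g: "size (filter_mset (\<lambda>x. x \<in> U) (target_of A)) \<le> size (filter_mset good Au)"
    using filter_target_good[OF reg bk] fg by simp
  have "size (filter_mset (\<lambda>x. x \<in> U) (source_of A)) + size (filter_mset (\<lambda>x. x \<in> U) N) =
        size (filter_mset (\<lambda>x. x \<in> U) (target_of A)) + size (filter_mset (\<lambda>x. x \<in> U) P)"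
    using arg_cong[OF eq, of "\<lambda>M. size (filter_mset (\<lambda>x. x \<in> U) M)"] by simp
  moreover have "size (filter_mset (\<lambda>x. x \<in> U) (source_of A)) = size Au"
    by (simp add: filter_source Au_def)
  moreover have "size Au = size (filter_mset good Au) + size (filter_mset (\<lambda>\<sigma>. \<not> good \<sigma>) Au)"
    by (metis multiset_partition size_union)
  moreover have "size (filter_mset (\<lambda>x. x \<in> U) P) \<le> size P" by simp
  ultimately have bad: "size (filter_mset (\<lambda>\<sigma>. \<not> good \<sigma>) Au) \<le> size P" using g by linarith
  have "\<not> good \<tau>" using acyc True unfolding good_def U_def by auto
  moreover have "src \<tau> \<in> U" by (simp add: U_def)
  ultimately have "count A \<tau> = count (filter_mset (\<lambda>\<sigma>. \<not> good \<sigma>) Au) \<tau>" by (simp add: Au_def)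
  also have "\<dots> \<le> size (filter_mset (\<lambda>\<sigma>. \<not> good \<sigma>) Au)" by (rule count_le_size)
  finally show ?thesis using bad by linarith
qed



definition indep :: "('c \<Rightarrow> 'a \<Rightarrow> rat) \<Rightarrow> 'c set \<Rightarrow> bool" where
  "indep vec Y \<longleftrightarrow> (\<forall>c. (\<forall>x. (\<Sum>C\<in>Y. c C * vec C x) = 0) \<longrightarrow> (\<forall>C\<in>Y. c C = 0))"

lemma sum_fun_apply: "(\<Sum>i\<in>I. (f i :: 'a \<Rightarrow> 'b::comm_monoid_add)) x = (\<Sum>i\<in>I. f i x)"
  by (induction I rule: infinite_finite_induct) (auto simp: zero_fun_def plus_fun_def)

lemma carath:
  fixes vec :: "'c \<Rightarrow> 'a \<Rightarrow> rat"
  assumes "finite X" "\<forall>C\<in>X. \<beta> C \<ge> 0" "\<forall>x. w x = (\<Sum>C\<in>X. \<beta> C * vec C x)"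
  shows "\<exists>Y \<beta>'. Y \<subseteq> X \<and> (\<forall>C\<in>Y. \<beta>' C \<ge> 0) \<and> (\<forall>x. w x = (\<Sum>C\<in>Y. \<beta>' C * vec C x)) \<and> indep vec Y"
  using assms
proof (induction "card X" arbitrary: X \<beta> rule: less_induct)
  case less
  show ?case
  proof (cases "indep vec X")
    case True then show ?thesis using less.prems by blast
  next
    case False
    then obtain c C1 where c: "\<forall>x. (\<Sum>C\<in>X. c C * vec C x) = 0" "C1 \<in> X" "c C1 \<noteq> 0"
      unfolding indep_def by blast
    define d where "d = (if c C1 > 0 then c else (\<lambda>C. - c C))"
    have d0: "\<forall>x. (\<Sum>C\<in>X. d C * vec C x) = 0"
      using c(1) by (simp add: d_def sum_negf)
    have d1: "d C1 > 0" using c(3) by (simp add: d_def)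
    define Pos where "Pos = {C\<in>X. d C > 0}"
    have fP: "finite Pos" "Pos \<noteq> {}" using less.prems(1) d1 c(2) by (auto simp: Pos_def)
    define t where "t = Min ((\<lambda>C. \<beta> C / d C) ` Pos)"
    have "t \<in> (\<lambda>C. \<beta> C / d C) ` Pos" unfolding t_def using fP by (intro Min_in) auto
    then obtain C0 where C0: "C0 \<in> Pos" "t = \<beta> C0 / d C0" by blast
    have tle: "\<And>C. C \<in> Pos \<Longrightarrow> t \<le> \<beta> C / d C" unfolding t_def using fP by auto
    have t0: "t \<ge> 0" using C0 less.prems(2) by (auto simp: Pos_def)
    define \<beta>' where "\<beta>' = (\<lambda>C. \<beta> C - t * d C)"
    have b'0: "\<forall>C\<in>X. \<beta>' C \<ge> 0"
    proof
      fix C assume C: "C \<in> X"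
      show "\<beta>' C \<ge> 0"
      proof (cases "d C > 0")
        case True
        then have "t \<le> \<beta> C / d C" using tle C by (auto simp: Pos_def)
        then have "t * d C \<le> \<beta> C" using True by (simp add: pos_le_divide_eq)
        then show ?thesis by (simp add: \<beta>'_def)
      next
        case False
        then have "t * d C \<le> 0" using t0 by (simp add: mult_nonneg_nonpos)
        moreover have "\<beta> C \<ge> 0" using less.prems(2) C by blast
        ultimately show ?thesis by (simp add: \<beta>'_def)
      qed
    qed
    have bC0: "\<beta>' C0 = 0" using C0 by (auto simp: \<beta>'_def Pos_def)
    have w': "\<forall>x. w x = (\<Sum>C\<in>X. \<beta>' C * vec C x)"
    proof
      fix x
      have "(\<Sum>C\<in>X. \<beta>' C * vec C x) = (\<Sum>C\<in>X. \<beta> C * vec C x) - t * (\<Sum>C\<in>X. d C * vec C x)"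
        by (simp add: \<beta>'_def algebra_simps sum_subtractf sum_distrib_left)
      then show "w x = (\<Sum>C\<in>X. \<beta>' C * vec C x)" using d0 less.prems(3) by simp
    qed
    have C0X: "C0 \<in> X" using C0 by (simp add: Pos_def)
    have w'': "\<forall>x. w x = (\<Sum>C\<in>X - {C0}. \<beta>' C * vec C x)"
      using w' bC0 C0X less.prems(1) by (simp add: sum.remove)
    have "card (X - {C0}) < card X" using C0X less.prems(1) by (meson card_Diff1_less)
    from less.hyps[OF this _ _ w''] b'0 less.prems(1)
    obtain Y \<beta>'' where "Y \<subseteq> X - {C0}" "\<forall>C\<in>Y. \<beta>'' C \<ge> 0" "\<forall>x. w x = (\<Sum>C\<in>Y. \<beta>'' C * vec C x)" "indep vec Y"
      by auto
    then show ?thesis by blast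
  qed
qed

lemma indep_inj:
  fixes vec :: "'c \<Rightarrow> 'a \<Rightarrow> rat"
  assumes "finite Y" "indep vec Y"
  shows "inj_on vec Y"
proof
  fix C1 C2 assume C: "C1 \<in> Y" "C2 \<in> Y" "vec C1 = vec C2"
  show "C1 = C2"
  proof (rule ccontr)
    assume ne: "C1 \<noteq> C2"
    define c where "c = (\<lambda>C. if C = C1 then (1::rat) else if C = C2 then -1 else 0)"
    have "\<forall>x. (\<Sum>C\<in>Y. c C * vec C x) = 0"
    proof
      fix x
      have "(\<Sum>C\<in>Y. c C * vec C x) = (\<Sum>C\<in>{C1,C2}. c C * vec C x)"
        using C assms(1) by (intro sum.mono_neutral_right) (auto simp: c_def)
      also have "\<dots> = 0" using ne C(3) by (simp add: c_def)
      finally show "(\<Sum>C\<in>Y. c C * vec C x) = 0" .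
    qed
    with assms(2) C(1) have "c C1 = 0" unfolding indep_def by blast
    then show False by (simp add: c_def)
  qed
qed

lemma dim_bound:
  fixes vec :: "'c \<Rightarrow> 'a \<Rightarrow> rat"
  assumes T: "finite T" and Y: "finite Y" and ind: "indep vec Y"
    and supp: "\<forall>C\<in>Y. \<forall>x. x \<notin> T \<longrightarrow> vec C x = 0"
  shows "card Y \<le> card T"
proof -
  interpret V: vector_space "\<lambda>(r::rat) (f::'a\<Rightarrow>rat). (\<lambda>x. r * f x)"
    by unfold_locales (auto simp: fun_eq_iff algebra_simps plus_fun_def)
  have inj: "inj_on vec Y" using indep_inj[OF Y ind] .
  define V where "V = vec ` Y"
  have cV: "card V = card Y" using inj by (simp add: V_def card_image)
  have fV: "finite V" using Y by (simp add: V_def)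
  have iV: "V.independent V"
  proof (rule V.independent_if_scalars_zero[OF fV])
    fix f v assume s: "(\<Sum>x\<in>V. (\<lambda>y. f x * x y)) = 0" and v: "v \<in> V"
    define c where "c = (\<lambda>C. f (vec C))"
    have "\<forall>x. (\<Sum>C\<in>Y. c C * vec C x) = 0"
    proof
      fix x
      have "(\<Sum>C\<in>Y. c C * vec C x) = (\<Sum>u\<in>V. f u * u x)"
        unfolding V_def c_def using inj by (simp add: sum.reindex)
      also have "\<dots> = (\<Sum>u\<in>V. (\<lambda>y. f u * u y)) x" by (simp add: sum_fun_apply)
      also have "\<dots> = 0" using s by (simp add: zero_fun_def)
      finally show "(\<Sum>C\<in>Y. c C * vec C x) = 0" .
    qed
    with ind have "\<forall>C\<in>Y. c C = 0" unfolding indep_def by blast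
    then show "f v = 0" using v by (auto simp: V_def c_def)
  qed
  define e where "e = (\<lambda>t::'a. (\<lambda>x. if x = t then (1::rat) else 0))"
  have sp: "V \<subseteq> V.span (e ` T)"
  proof
    fix v assume v: "v \<in> V"
    have "v = (\<Sum>t\<in>T. (\<lambda>x. v t * e t x))"
    proof
      fix x
      have "(\<Sum>t\<in>T. (\<lambda>x. v t * e t x)) x = (\<Sum>t\<in>T. v t * e t x)" by (simp add: sum_fun_apply)
      also have "\<dots> = v x"
      proof (cases "x \<in> T")
        case True
        then have "(\<Sum>t\<in>T. v t * e t x) = (\<Sum>t\<in>{x}. v t * e t x)"
          using T by (intro sum.mono_neutral_right) (auto simp: e_def)
        then show ?thesis by (simp add: e_def)
      next
        case False
        then have "(\<Sum>t\<in>T. v t * e t x) = 0" by (intro sum.neutral) (auto simp: e_def)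
        moreover have "v x = 0" using False v supp by (auto simp: V_def)
        ultimately show ?thesis by simp
      qed
      finally show "v x = (\<Sum>t\<in>T. (\<lambda>x. v t * e t x)) x" by simp
    qed
    also have "\<dots> \<in> V.span (e ` T)"
      by (intro V.span_sum V.span_scale V.span_base) auto
    finally show "v \<in> V.span (e ` T)" .
  qed
  have "card V \<le> card (e ` T)" using V.independent_span_bound[OF _ iV sp] T by auto
  also have "\<dots> \<le> card T" using card_image_le T by blast
  finally show ?thesis using cV by simp
qed



lemma reg_of: "regular_grammar \<Sigma> S s0 \<delta> \<Longrightarrow> \<forall>\<tau>\<in>\<delta>. size (tgt \<tau>) \<le> 1"
  by (simp add: regular_grammar_def)

lemma pathm_mono: "pathm M ws s t \<Longrightarrow> set_mset M \<subseteq> set_mset M' \<Longrightarrow> pathm M' ws s t"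
  unfolding pathm_def by auto

lemma run_add_cycle:
  assumes run: "is_run \<delta> s0 D" and cf: "cycle_from \<delta> C s" and s: "s \<in> supp D"
  shows "is_run \<delta> s0 (D + repeat_mset n C)"
proof (cases "n = 0")
  case True then show ?thesis using run by simp
next
  case False
  define D' where "D' = D + repeat_mset n C"
  have "set_mset (repeat_mset n C) = set_mset C" using False
    by (simp add: set_eq_iff flip: count_greater_zero_iff)
  then have setD': "set_mset D' = set_mset D \<union> set_mset C" by (simp add: D'_def)
  have c1: "connected_from D s0" and c2: "connected_from C s" and bal: "source_of C = target_of C"
    using run cf by (auto simp: is_run_def cycle_from_def)
  have supp': "supp D' = supp D \<union> supp C" using setD' by (auto simp: supp_eq)
  have reachs: "s = s0 \<or> (\<exists>ws. pathm D' ws s0 s)"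
    using c1 s unfolding connected_from_alt using pathm_mono setD' by blast
  have "connected_from D' s0"
    unfolding connected_from_alt
  proof
    fix t assume "t \<in> supp D'"
    then consider "t \<in> supp D" | "t \<in> supp C" using supp' by blast
    then show "t = s0 \<or> (\<exists>ws. pathm D' ws s0 t)"
    proof cases
      case 1 then show ?thesis using c1 unfolding connected_from_alt using pathm_mono setD' by blast
    next
      case 2
      then have "t = s \<or> (\<exists>ws. pathm D' ws s t)"
        using c2 unfolding connected_from_alt using pathm_mono setD' by blast
      then show ?thesis using reachs pathm_append by blast
    qed
  qed
  moreover have "set_mset D' \<subseteq> \<delta>" using setD' run cf by (auto simp: is_run_def cycle_from_def)
  moreover have "source_of D' = target_of D' + {#s0#}"
    using run bal by (simp add: D'_def is_run_def)
  ultimately show ?thesis by (simp add: is_run_def D'_def)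
qed

lemma run_add_cycles:
  assumes run: "is_run \<delta> s0 D" and Cs: "\<forall>C\<in>set Cs. C \<in> simple_cycles_from \<delta> (supp D)"
  shows "m \<le> length Cs \<Longrightarrow> is_run \<delta> s0 (D + (\<Sum>i<m. repeat_mset (\<alpha> i) (Cs!i)))"
proof (induction m)
  case 0 then show ?case using run by simp
next
  case (Suc m)
  then have r: "is_run \<delta> s0 (D + (\<Sum>i<m. repeat_mset (\<alpha> i) (Cs!i)))" by simp
  have "Cs!m \<in> simple_cycles_from \<delta> (supp D)" using Cs Suc.prems by simp
  then obtain s where s: "s \<in> supp D" "cycle_from \<delta> (Cs!m) s" by (auto simp: simple_cycles_from_def)
  have "s \<in> supp (D + (\<Sum>i<m. repeat_mset (\<alpha> i) (Cs!i)))" using s(1) by (auto simp: supp_eq)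
  from run_add_cycle[OF r s(2) this, of "\<alpha> m"] show ?case by (simp add: add.assoc)
qed

lemma if_direction:
  assumes run: "is_run \<delta> s0 D" and Cs: "\<forall>C\<in>set Cs. C \<in> simple_cycles_from \<delta> (supp D)"
    and K: "K = out_of D + (\<Sum>i<length Cs. repeat_mset (\<alpha> i) (out_of (Cs ! i)))"
  shows "K \<in> out_lang \<delta> s0"
proof -
  have "is_run \<delta> s0 (D + (\<Sum>i<length Cs. repeat_mset (\<alpha> i) (Cs!i)))"
    using run_add_cycles[OF run Cs] by simp
  moreover have "out_of (D + (\<Sum>i<length Cs. repeat_mset (\<alpha> i) (Cs!i))) = K"
    using K by (simp add: out_of_sum)
  ultimately show ?thesis unfolding out_lang_def by blast
qed

lemma run_reg: "is_run \<delta> s0 D \<Longrightarrow> \<forall>\<tau>\<in>\<delta>. size (tgt \<tau>) \<le> 1 \<Longrightarrow> \<forall>\<tau>\<in>#D. size (tgt \<tau>) \<le> 1"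
  by (auto simp: is_run_def)

lemma restrict_run:
  assumes reg: "\<forall>\<sigma>\<in>#M. size (tgt \<sigma>) \<le> 1" and sd: "set_mset M \<subseteq> \<delta>"
    and bal: "source_of M = target_of M + {#s0#}"
  shows "is_run \<delta> s0 (filter_mset (\<lambda>\<sigma>. (s0, src \<sigma>) \<in> (E M)\<^sup>*) M)"
proof -
  define R where "R = {x. (s0,x) \<in> (E M)\<^sup>*}"
  define Mr where "Mr = filter_mset (\<lambda>\<sigma>. src \<sigma> \<in> R) M"
  have closed: "\<forall>\<sigma>\<in>#M. src \<sigma> \<in> R \<longrightarrow> set_mset (tgt \<sigma>) \<subseteq> R"
  proof (intro ballI impI subsetI)
    fix \<sigma> v assume "\<sigma> \<in># M" "src \<sigma> \<in> R" "v \<in># tgt \<sigma>"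
    then have "(src \<sigma>, v) \<in> E M" "(s0, src \<sigma>) \<in> (E M)\<^sup>*" using E_I R_def by auto
    then show "v \<in> R" unfolding R_def by simp
  qed
  have bbal: "source_of Mr = target_of Mr + {#s0#}"
    using restrict_balance[OF reg closed bal] by (simp add: Mr_def R_def)
  have conn: "connected_from Mr s0"
    unfolding connected_from_alt
  proof
    fix t assume "t \<in> supp Mr"
    then obtain \<sigma> where "\<sigma> \<in># Mr" "t = src \<sigma>" by (auto simp: supp_eq)
    then have "(s0,t) \<in> (E M)\<^sup>*" by (simp add: Mr_def R_def)
    then have "(s0,t) \<in> (E Mr)\<^sup>*" using rtrancl_restrict unfolding Mr_def R_def by simp
    from rtrancl_pathm[OF this] show "t = s0 \<or> (\<exists>ws. pathm Mr ws s0 t)" by blast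
  qed
  have "set_mset Mr \<subseteq> \<delta>" using sd by (auto simp: Mr_def)
  then show ?thesis using conn bbal by (simp add: is_run_def Mr_def R_def)
qed

lemma min_run:
  assumes reg: "\<forall>\<tau>\<in>\<delta>. size (tgt \<tau>) \<le> 1" and R: "is_run \<delta> s0 R"
  shows "\<exists>D. is_run \<delta> s0 D \<and> (\<forall>\<tau>. count D \<tau> \<le> 1)"
proof -
  obtain D where D: "is_run \<delta> s0 D" and mn: "\<forall>D'. is_run \<delta> s0 D' \<longrightarrow> size D \<le> size D'"
    using ex_has_least_nat[of "is_run \<delta> s0" R size] R by blast
  have regD: "\<forall>\<sigma>\<in>#D. size (tgt \<sigma>) \<le> 1" using run_reg[OF D reg] .
  have acyc: "\<forall>\<sigma>\<in>#D. \<forall>v\<in>#tgt \<sigma>. (v, src \<sigma>) \<notin> (E D)\<^sup>*"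
  proof (intro ballI notI)
    fix \<sigma> v assume a: "\<sigma> \<in># D" "v \<in># tgt \<sigma>" "(v, src \<sigma>) \<in> (E D)\<^sup>*"
    obtain B where B: "B \<subseteq># mset_set (set_mset D)" "B \<noteq> {#}" "source_of B = target_of B"
      using closed_walk[OF regD a] by blast
    have BD: "B \<subseteq># D" using B(1) mset_set_set_mset_msubset subset_mset.order_trans by blast
    define D1 where "D1 = D - B"
    have DD: "D = D1 + B" using BD by (simp add: D1_def)
    have b1: "source_of D1 = target_of D1 + {#s0#}"
      using D B(3) DD unfolding is_run_def by (metis add.commute add.left_commute add_right_cancel source_of_plus target_of_plus)
    have "set_mset D1 \<subseteq> set_mset D" using DD by auto
    then have r1: "\<forall>\<sigma>\<in>#D1. size (tgt \<sigma>) \<le> 1" "set_mset D1 \<subseteq> \<delta>" using regD D by (auto simp: is_run_def)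
    have "is_run \<delta> s0 (filter_mset (\<lambda>\<sigma>. (s0, src \<sigma>) \<in> (E D1)\<^sup>*) D1)"
      by (rule restrict_run[OF r1 b1])
    moreover have "size (filter_mset (\<lambda>\<sigma>. (s0, src \<sigma>) \<in> (E D1)\<^sup>*) D1) < size D"
    proof -
      have "size (filter_mset (\<lambda>\<sigma>. (s0, src \<sigma>) \<in> (E D1)\<^sup>*) D1) \<le> size D1" by simp
      moreover have "size D1 < size D" using DD B(2) by (simp add: nonempty_has_size)
      ultimately show ?thesis by linarith
    qed
    ultimately show False using mn by fastforce
  qed
  have eq: "source_of D + {#} = target_of D + {#s0#}" using D by (simp add: is_run_def)
  have "\<forall>\<tau>. count D \<tau> \<le> 1" using cut[OF regD acyc eq] by simp
  with D show ?thesis by blast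
qed

definition optm :: "nat option \<Rightarrow> nat multiset" where
  "optm ov = (case ov of None \<Rightarrow> {#} | Some x \<Rightarrow> {#x#})"

lemma small_mset: "size M \<le> 1 \<Longrightarrow> set_mset M \<subseteq> X \<Longrightarrow> \<exists>ov\<in>insert None (Some ` X). M = optm ov"
proof -
  assume a: "size M \<le> 1" "set_mset M \<subseteq> X"
  show ?thesis
  proof (cases "size M = 0")
    case True then show ?thesis by (auto simp: optm_def intro!: bexI[of _ None])
  next
    case False
    then have "size M = 1" using a by linarith
    then obtain x where "M = {#x#}" using size_1_singleton_mset by blast
    with a show ?thesis by (auto simp: optm_def intro!: bexI[of _ "Some x"])
  qed
qed

lemma card_opt: "finite X \<Longrightarrow> card (insert None (Some ` X)) = card X + 1"
  by (simp add: card_image)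

lemma card_delta:
  assumes "regular_grammar \<Sigma> S s0 \<delta>"
  shows "card \<delta> \<le> card S * (card \<Sigma> + 1) * (card S + 1)"
proof -
  have g: "comm_grammar \<Sigma> S s0 \<delta>" using assms by (simp add: regular_grammar_def)
  define OS where "OS = insert None (Some ` \<Sigma>)"
  define OT where "OT = insert None (Some ` S)"
  define g where "g = (\<lambda>(s::nat, a, t). (s, optm a, optm t))"
  have fin: "finite \<Sigma>" "finite S" using g by (auto simp: comm_grammar_def)
  have "\<delta> \<subseteq> g ` (S \<times> OS \<times> OT)"
  proof
    fix \<tau> assume t: "\<tau> \<in> \<delta>"
    obtain s a b where tau: "\<tau> = (s, a, b)" by (cases \<tau>) auto
    have "src \<tau> \<in> S \<and> set_mset (outp \<tau>) \<subseteq> \<Sigma> \<and> set_mset (tgt \<tau>) \<subseteq> S \<and> size (outp \<tau>) \<le> 1 \<and> size (tgt \<tau>) \<le> 1"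
      using g assms t unfolding comm_grammar_def regular_grammar_def by blast
    then have p: "s \<in> S" "set_mset a \<subseteq> \<Sigma>" "set_mset b \<subseteq> S" "size a \<le> 1" "size b \<le> 1" "size b \<le> 1"
      using tau by (auto simp: src_def outp_def tgt_def)
    obtain o1 where o1: "o1 \<in> OS" "a = optm o1" using small_mset[OF p(4) p(2)] OS_def by blast
    obtain o2 where o2: "o2 \<in> OT" "b = optm o2" using small_mset[OF p(6) p(3)] OT_def by blast
    show "\<tau> \<in> g ` (S \<times> OS \<times> OT)"
      using p(1) o1 o2 tau by (auto simp: g_def image_iff intro!: bexI[of _ "(s, o1, o2)"])
  qed
  then have "card \<delta> \<le> card (g ` (S \<times> OS \<times> OT))"
    using fin by (intro card_mono) (auto simp: OS_def OT_def)
  also have "\<dots> \<le> card (S \<times> OS \<times> OT)" by (rule card_image_le) (use fin in \<open>auto simp: OS_def OT_def\<close>)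
  also have "\<dots> = card S * (card \<Sigma> + 1) * (card S + 1)"
  proof -
    have "card OS = card \<Sigma> + 1" "card OT = card S + 1" by (simp_all only: OS_def OT_def card_opt[OF fin(1)] card_opt[OF fin(2)])
    then show ?thesis by (simp add: card_cartesian_product algebra_simps)
  qed
  finally show ?thesis .
qed

lemma arith_bound:
  fixes a b :: nat
  assumes "a \<ge> 1" "b \<ge> 1"
  shows "2 * (a * (b + 1) * (a + 1)) + 2 \<le> 12 * a ^ (2 * b) * fact b"
proof -
  have f: "b + 1 \<le> 2 * fact b" using fact_ge_self[of b] assms by linarith
  have p: "a ^ 2 \<le> a ^ (2 * b)" using assms by (intro power_increasing) auto
  have "2 * (a * (b + 1) * (a + 1)) + 2 \<le> 2 * (a * (b + 1) * (2 * a)) + 2 * (a * a * (b+1))"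
  proof -
    have aa: "1 \<le> a * a" using assms by (simp add: one_le_mult_iff)
    have h1: "a + 1 \<le> 2 * a" "1 \<le> a * a * (b + 1)" using assms aa
       apply simp
      by (metis aa le_add2 le_trans mult_le_mono2 nat_mult_1_right)
    show ?thesis using h1 by (intro add_mono mult_le_mono order.refl) auto
  qed
  also have "\<dots> = 6 * (a * a) * (b + 1)" by (simp add: algebra_simps)
  also have "\<dots> \<le> 6 * (a * a) * (2 * fact b)" using f by (intro mult_le_mono2)
  also have "\<dots> = 12 * a ^ 2 * fact b" by (simp add: power2_eq_square)
  also have "\<dots> \<le> 12 * a ^ (2 * b) * fact b" using p by simp
  finally show ?thesis .
qed



lemma phase1:
  assumes reg: "\<forall>\<tau>\<in>\<delta>. size (tgt \<tau>) \<le> 1" and fd: "finite \<delta>" and R: "is_run \<delta> s0 R"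
  shows "\<exists>D Cs. is_run \<delta> s0 D \<and> set_mset D = set_mset R \<and>
     (\<forall>C\<in>set Cs. C \<in> simple_cycles_from \<delta> (supp R) \<and> (\<forall>\<tau>. count C \<tau> \<le> 1)) \<and>
     R = D + sum_list Cs \<and> (\<forall>\<tau>. count D \<tau> \<le> card \<delta> + 2)"
proof -
  define P1 where "P1 = (\<lambda>D. is_run \<delta> s0 D \<and> set_mset D = set_mset R \<and>
     (\<exists>Cs. (\<forall>C\<in>set Cs. C \<in> simple_cycles_from \<delta> (supp R) \<and> (\<forall>\<tau>. count C \<tau> \<le> 1)) \<and>
     R = D + sum_list Cs))"
  have "P1 R" using R unfolding P1_def by (intro conjI exI[of _ "[]"]) auto
  then obtain D where PD: "P1 D" and mn: "\<forall>D'. P1 D' \<longrightarrow> size D \<le> size D'"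
    using ex_has_least_nat[of P1 R size] by blast
  from PD obtain Cs where D: "is_run \<delta> s0 D" "set_mset D = set_mset R"
    and Cs: "\<forall>C\<in>set Cs. C \<in> simple_cycles_from \<delta> (supp R) \<and> (\<forall>\<tau>. count C \<tau> \<le> 1)"
    and RD: "R = D + sum_list Cs" unfolding P1_def by blast
  define SD where "SD = mset_set (set_mset D)"
  define A where "A = D - SD"
  have SDD: "SD \<subseteq># D" unfolding SD_def by (rule mset_set_set_mset_msubset)
  have DA: "D = A + SD" using SDD by (simp add: A_def)
  have sD: "set_mset D \<subseteq> \<delta>" using D by (simp add: is_run_def)
  have regD: "\<forall>\<sigma>\<in>#D. size (tgt \<sigma>) \<le> 1" using sD reg by auto
  have sA: "set_mset A \<subseteq> set_mset D" using DA by auto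
  have regA: "\<forall>\<sigma>\<in>#A. size (tgt \<sigma>) \<le> 1" using sA regD by auto
  have acyc: "\<forall>\<sigma>\<in>#A. \<forall>v\<in>#tgt \<sigma>. (v, src \<sigma>) \<notin> (E A)\<^sup>*"
  proof (intro ballI notI)
    fix \<sigma> v assume a: "\<sigma> \<in># A" "v \<in># tgt \<sigma>" "(v, src \<sigma>) \<in> (E A)\<^sup>*"
    obtain B where B: "B \<subseteq># mset_set (set_mset A)" "B \<noteq> {#}" "source_of B = target_of B"
      using closed_walk[OF regA a] by blast
    have BA: "B \<subseteq># A" using B(1) mset_set_set_mset_msubset subset_mset.order_trans by blast
    have sB: "set_mset B \<subseteq> \<delta>" using BA sA sD set_mset_mono by blast
    have regB: "\<forall>\<sigma>\<in>#B. size (tgt \<sigma>) \<le> 1" using sB reg by auto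
    obtain C0 where C0: "C0 \<subseteq># B" "C0 \<noteq> {#}" "is_cycle \<delta> C0"
      using cycle_in_balanced[OF regB sB B(2) B(3)] by blast
    obtain C where C: "C \<subseteq># C0" "simple_cycle \<delta> C" using simple_exists[OF C0(2) C0(3)] by blast
    have CmA: "C \<subseteq># mset_set (set_mset A)" using C(1) C0(1) B(1) subset_mset.order_trans by blast
    have CA: "C \<subseteq># A" using CmA mset_set_set_mset_msubset subset_mset.order_trans by blast
    have Cne: "C \<noteq> {#}" and Ccyc: "is_cycle \<delta> C" using C(2) by (auto simp: simple_cycle_def)
    have cnt: "\<forall>\<tau>. count C \<tau> \<le> 1"
    proof
      fix \<tau>
      have "count C \<tau> \<le> count (mset_set (set_mset A)) \<tau>" using CmA by (simp add: mset_subset_eq_count)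
      also have "\<dots> \<le> 1" unfolding count_mset_set' by simp
      finally show "count C \<tau> \<le> 1" .
    qed
    obtain s where cf: "cycle_from \<delta> C s" using Ccyc unfolding is_cycle_def by blast
    have "s \<in> supp C" using cycle_from_src[OF cf Cne] .
    moreover have "set_mset C \<subseteq> set_mset R" using CA sA D(2) set_mset_mono by blast
    ultimately have sR: "s \<in> supp R" unfolding supp_eq by blast
    have Csc: "C \<in> simple_cycles_from \<delta> (supp R)" unfolding simple_cycles_from_def using sR cf C(2) by blast
    have balC: "source_of C = target_of C" using cf by (simp add: cycle_from_def)
    define D' where "D' = D - C"
    have cntCS: "\<And>x. count C x + count SD x \<le> count D x"
    proof -
      fix x
      have "count C x \<le> count A x" using CA by (simp add: mset_subset_eq_count)
      then show "count C x + count SD x \<le> count D x" using DA by simp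
    qed
    have CD: "C \<subseteq># D"
    proof (rule mset_subset_eqI)
      fix x show "count C x \<le> count D x" using cntCS[of x] by linarith
    qed
    have DD': "D = D' + C" using CD by (simp add: D'_def)
    have setD': "set_mset D' = set_mset D"
    proof
      show "set_mset D' \<subseteq> set_mset D" using DD' by auto
      show "set_mset D \<subseteq> set_mset D'"
      proof
        fix x assume x: "x \<in># D"
        have "count SD x = 1" using x by (simp add: SD_def)
        with cntCS[of x] have "count D' x \<ge> 1" by (simp add: D'_def)
        then show "x \<in># D'" by (simp add: Suc_le_eq)
      qed
    qed
    have runD': "is_run \<delta> s0 D'"
    proof -
      have "source_of D' + source_of C = target_of D' + target_of C + {#s0#}"
        using D by (simp add: is_run_def DD')
      then have "source_of D' = target_of D' + {#s0#}" using balC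
        by (simp add: add.commute add.left_commute)
      then show ?thesis using D setD' connected_from_cong[of D D' s0] by (auto simp: is_run_def)
    qed
    have R': "R = D' + sum_list (C # Cs)" using RD DD' by (simp add: add.assoc)
    have Cs': "\<forall>C'\<in>set (C # Cs). C' \<in> simple_cycles_from \<delta> (supp R) \<and> (\<forall>\<tau>. count C' \<tau> \<le> 1)"
      using Csc cnt Cs by simp
    have "P1 D'" unfolding P1_def
      using runD' setD' D(2) R' Cs' by blast
    moreover have "size D' < size D" using DD' Cne by (simp add: nonempty_has_size)
    ultimately show False using mn by (meson leD)
  qed
  have eq: "source_of A + source_of SD = target_of A + (target_of SD + {#s0#})"
  proof -
    show ?thesis using D by (simp add: is_run_def DA add.assoc)
  qed
  have bound: "\<forall>\<tau>. count D \<tau> \<le> card \<delta> + 2"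
  proof
    fix \<tau>
    have "count A \<tau> \<le> size (target_of SD + {#s0#})" by (rule cut[OF regA acyc eq])
    also have "\<dots> \<le> size SD + 1"
    proof -
      have "\<forall>\<sigma>\<in>#SD. size (tgt \<sigma>) \<le> 1" using regD SDD by (meson mset_subset_eqD)
      then show ?thesis using size_target_le by fastforce
    qed
    also have "size SD \<le> card \<delta>" unfolding SD_def using sD fd by (simp add: card_mono)
    finally have "count A \<tau> \<le> card \<delta> + 1" by simp
    moreover have "count SD \<tau> \<le> 1" by (simp add: SD_def count_mset_set')
    ultimately show "count D \<tau> \<le> card \<delta> + 2" using DA by simp
  qed
  show ?thesis using D Cs RD bound by blast
qed



lemma count_sum_list_mset:
  "count (sum_list Cs) \<tau> = (\<Sum>C\<in>set Cs. count (mset Cs) C * count C \<tau>)"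
proof (induction Cs)
  case Nil then show ?case by simp
next
  case (Cons C Cs)
  have pt: "\<And>C'. count (mset (C#Cs)) C' * count C' \<tau> =
      count (mset Cs) C' * count C' \<tau> + (if C' = C then count C' \<tau> else 0)"
    by auto
  have "(\<Sum>C'\<in>set (C#Cs). count (mset (C#Cs)) C' * count C' \<tau>) =
      (\<Sum>C'\<in>insert C (set Cs). count (mset Cs) C' * count C' \<tau>) +
      (\<Sum>C'\<in>insert C (set Cs). (if C' = C then count C' \<tau> else 0))"
    unfolding pt by (simp add: sum.distrib)
  also have "(\<Sum>C'\<in>insert C (set Cs). count (mset Cs) C' * count C' \<tau>) =
      (\<Sum>C'\<in>set Cs. count (mset Cs) C' * count C' \<tau>)"
    by (simp add: sum.insert_if count_mset_0_iff)
  also have "(\<Sum>C'\<in>insert C (set Cs). (if C' = C then count C' \<tau> else 0)) = count C \<tau>"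
    by (simp add: sum.delta)
  finally show ?case using Cons by simp
qed

lemma sum_nth_set:
  assumes "distinct xs"
  shows "(\<Sum>i<length xs. f (xs!i)) = (\<Sum>C\<in>set xs. f C)"
proof -
  have inj: "inj_on (nth xs) {..<length xs}" using assms by (simp add: inj_on_nth)
  have im: "nth xs ` {..<length xs} = set xs" by (auto simp: set_conv_nth)
  show ?thesis using sum.reindex[OF inj, of f] im by simp
qed

lemma cyc_bal: "C \<in> simple_cycles_from \<delta> T \<Longrightarrow> source_of C = target_of C \<and> set_mset C \<subseteq> \<delta>"
  unfolding simple_cycles_from_def cycle_from_def by blast

lemma phase2:
  assumes fd: "finite \<delta>"
    and Cs: "\<forall>C\<in>set Cs. C \<in> simple_cycles_from \<delta> T \<and> (\<forall>\<tau>. count C \<tau> \<le> 1)"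
  shows "\<exists>xs \<alpha> F. (\<forall>C\<in>set xs. C \<in> simple_cycles_from \<delta> T) \<and> lin_indep xs \<and>
     sum_list Cs = F + (\<Sum>i<length xs. repeat_mset (\<alpha> i) (xs!i)) \<and>
     source_of F = target_of F \<and> (\<forall>\<tau>. count F \<tau> \<le> card \<delta>)"
proof -
  define vec where "vec = (\<lambda>(C::trans multiset) \<tau>. (of_nat (count C \<tau>) :: rat))"
  define W where "W = sum_list Cs"
  define \<beta> where "\<beta> = (\<lambda>C. (of_nat (count (mset Cs) C) :: rat))"
  have rep0: "\<forall>\<tau>. of_nat (count W \<tau>) = (\<Sum>C\<in>set Cs. \<beta> C * vec C \<tau>)"
    unfolding W_def \<beta>_def vec_def count_sum_list_mset by simp
  obtain Y \<beta>' where Y: "Y \<subseteq> set Cs" "\<forall>C\<in>Y. \<beta>' C \<ge> 0"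
      "\<forall>\<tau>. of_nat (count W \<tau>) = (\<Sum>C\<in>Y. \<beta>' C * vec C \<tau>)" "indep vec Y"
    using carath[of "set Cs" \<beta> "\<lambda>\<tau>. of_nat (count W \<tau>)" vec] rep0 by (auto simp: \<beta>_def)
  have fY: "finite Y" using Y(1) finite_subset by blast
  have YC: "\<And>C. C \<in> Y \<Longrightarrow> C \<in> simple_cycles_from \<delta> T \<and> (\<forall>\<tau>. count C \<tau> \<le> 1)" using Y(1) Cs by blast
  have cardY: "card Y \<le> card \<delta>"
  proof (rule dim_bound[OF fd fY Y(4)])
    show "\<forall>C\<in>Y. \<forall>x. x \<notin> \<delta> \<longrightarrow> vec C x = 0"
    proof (intro ballI allI impI)
      fix C x assume "C \<in> Y" "x \<notin> \<delta>"
      then have "x \<notin># C" using YC cyc_bal by blast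
      then show "vec C x = 0" by (simp add: vec_def not_in_iff)
    qed
  qed
  obtain xs where xs: "set xs = Y" "distinct xs" using finite_distinct_list[OF fY] by blast
  define n where "n = length xs"
  have nY: "n = card Y" using xs distinct_card[of xs] by (simp add: n_def)
  define \<alpha> where "\<alpha> = (\<lambda>i. nat \<lfloor>\<beta>' (xs!i)\<rfloor>)"
  define G where "G = (\<Sum>i<n. repeat_mset (\<alpha> i) (xs!i))"
  have cG: "\<And>\<tau>. (of_nat (count G \<tau>) :: rat) = (\<Sum>C\<in>Y. of_int \<lfloor>\<beta>' C\<rfloor> * vec C \<tau>)"
  proof -
    fix \<tau>
    have "(of_nat (count G \<tau>) :: rat) = (\<Sum>i<n. of_nat (\<alpha> i) * vec (xs!i) \<tau>)"
      by (simp add: G_def count_sum vec_def)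
    also have "\<dots> = (\<Sum>i<n. of_int \<lfloor>\<beta>' (xs!i)\<rfloor> * vec (xs!i) \<tau>)"
    proof (rule sum.cong[OF refl])
      fix i assume "i \<in> {..<n}"
      then have "xs!i \<in> Y" using xs by (auto simp: n_def)
      then have "\<beta>' (xs!i) \<ge> 0" using Y(2) by blast
      then show "of_nat (\<alpha> i) * vec (xs!i) \<tau> = of_int \<lfloor>\<beta>' (xs!i)\<rfloor> * vec (xs!i) \<tau>"
        by (simp add: \<alpha>_def)
    qed
    also have "\<dots> = (\<Sum>C\<in>Y. of_int \<lfloor>\<beta>' C\<rfloor> * vec C \<tau>)"
      using sum_nth_set[OF xs(2), of "\<lambda>C. of_int \<lfloor>\<beta>' C\<rfloor> * vec C \<tau>"] xs(1) by (simp add: n_def)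
    finally show "(of_nat (count G \<tau>) :: rat) = (\<Sum>C\<in>Y. of_int \<lfloor>\<beta>' C\<rfloor> * vec C \<tau>)" .
  qed
  have diff: "\<And>\<tau>. (of_nat (count W \<tau>) :: rat) - of_nat (count G \<tau>) = (\<Sum>C\<in>Y. (\<beta>' C - of_int \<lfloor>\<beta>' C\<rfloor>) * vec C \<tau>)"
  proof -
    fix \<tau>
    have e: "(\<Sum>C\<in>Y. (\<beta>' C - of_int \<lfloor>\<beta>' C\<rfloor>) * vec C \<tau>) = (\<Sum>C\<in>Y. \<beta>' C * vec C \<tau>) - (\<Sum>C\<in>Y. of_int \<lfloor>\<beta>' C\<rfloor> * vec C \<tau>)"
      by (simp add: left_diff_distrib sum_subtractf)
    have w: "of_nat (count W \<tau>) = (\<Sum>C\<in>Y. \<beta>' C * vec C \<tau>)" using Y(3) by blast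
    show "(of_nat (count W \<tau>) :: rat) - of_nat (count G \<tau>) = (\<Sum>C\<in>Y. (\<beta>' C - of_int \<lfloor>\<beta>' C\<rfloor>) * vec C \<tau>)"
      unfolding e using w cG[of \<tau>] by linarith
  qed
  have dnn: "\<And>\<tau>. (of_nat (count W \<tau>) :: rat) - of_nat (count G \<tau>) \<ge> 0"
    unfolding diff by (intro sum_nonneg) (auto simp: vec_def)
  have dle: "\<And>\<tau>. (of_nat (count W \<tau>) :: rat) - of_nat (count G \<tau>) \<le> of_nat (card Y)"
  proof -
    fix \<tau>
    have "(\<Sum>C\<in>Y. (\<beta>' C - of_int \<lfloor>\<beta>' C\<rfloor>) * vec C \<tau>) \<le> of_nat (card Y) * 1"
    proof (rule sum_bounded_above)
      fix C assume "C \<in> Y"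
      then have "count C \<tau> \<le> 1" using YC by blast
      then have v: "vec C \<tau> \<le> 1" "vec C \<tau> \<ge> 0" by (auto simp: vec_def)
      have f: "\<beta>' C - of_int \<lfloor>\<beta>' C\<rfloor> \<le> 1" "\<beta>' C - of_int \<lfloor>\<beta>' C\<rfloor> \<ge> 0"
        by (simp_all add: floor_le_iff) linarith
      show "(\<beta>' C - of_int \<lfloor>\<beta>' C\<rfloor>) * vec C \<tau> \<le> 1" using v f by (simp add: mult_le_one)
    qed
    then show "(of_nat (count W \<tau>) :: rat) - of_nat (count G \<tau>) \<le> of_nat (card Y)" using diff by simp
  qed
  have GW: "G \<subseteq># W"
  proof (rule mset_subset_eqI)
    fix \<tau> show "count G \<tau> \<le> count W \<tau>" using dnn[of \<tau>] by simp
  qed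
  define F where "F = W - G"
  have WFG: "W = F + G" using GW by (simp add: F_def)
  have cF: "\<forall>\<tau>. count F \<tau> \<le> card \<delta>"
  proof
    fix \<tau>
    have "(of_nat (count W \<tau>) :: rat) \<le> of_nat (count G \<tau>) + of_nat (card Y)" using dle[of \<tau>] by simp
    then have "count W \<tau> \<le> count G \<tau> + card Y" by (simp flip: of_nat_add)
    then show "count F \<tau> \<le> card \<delta>" using cardY by (simp add: F_def)
  qed
  have balW: "source_of W = target_of W" unfolding W_def
    using Cs cyc_bal by (intro source_target_sum_list) blast
  have balG: "source_of G = target_of G"
  proof -
    have "source_of G = (\<Sum>i<n. repeat_mset (\<alpha> i) (source_of (xs!i)))"
      by (simp add: G_def source_of_sum)
    also have "\<dots> = (\<Sum>i<n. repeat_mset (\<alpha> i) (target_of (xs!i)))"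
    proof (rule sum.cong[OF refl])
      fix i assume "i \<in> {..<n}"
      then have "xs!i \<in> Y" using xs by (auto simp: n_def)
      then show "repeat_mset (\<alpha> i) (source_of (xs!i)) = repeat_mset (\<alpha> i) (target_of (xs!i))"
        using YC cyc_bal by metis
    qed
    also have "\<dots> = target_of G" by (simp add: G_def target_of_sum)
    finally show ?thesis .
  qed
  have balF: "source_of F = target_of F"
    using balW balG WFG by (metis add_right_cancel source_of_plus target_of_plus)
  have li: "lin_indep xs"
    unfolding lin_indep_def
  proof (intro allI impI)
    fix c :: "nat \<Rightarrow> rat" and i
    assume z: "\<forall>\<tau>. (\<Sum>i<length xs. c i * of_nat (count (xs ! i) \<tau>)) = 0" and i: "i < length xs"
    have inj: "inj_on (nth xs) {..<n}" using xs by (simp add: inj_on_nth n_def)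
    define c' where "c' = (\<lambda>C. c (the_inv_into {..<n} (nth xs) C))"
    have c'i: "\<And>j. j < n \<Longrightarrow> c' (xs!j) = c j" unfolding c'_def using inj by (simp add: the_inv_into_f_f)
    have "\<forall>\<tau>. (\<Sum>C\<in>Y. c' C * vec C \<tau>) = 0"
    proof
      fix \<tau>
      have "(\<Sum>C\<in>Y. c' C * vec C \<tau>) = (\<Sum>j<n. c' (xs!j) * vec (xs!j) \<tau>)"
        using sum_nth_set[OF xs(2), of "\<lambda>C. c' C * vec C \<tau>"] xs(1) by (simp add: n_def)
      also have "\<dots> = (\<Sum>j<length xs. c j * of_nat (count (xs ! j) \<tau>))"
        using c'i by (simp add: n_def vec_def)
      finally show "(\<Sum>C\<in>Y. c' C * vec C \<tau>) = 0" using z by simp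
    qed
    with Y(4) have "\<forall>C\<in>Y. c' C = 0" unfolding indep_def by blast
    moreover have "xs!i \<in> Y" using i xs by auto
    ultimately show "c i = 0" using c'i i unfolding n_def by metis
  qed
  have "\<forall>C\<in>set xs. C \<in> simple_cycles_from \<delta> T" using xs YC by blast
  moreover have "sum_list Cs = F + (\<Sum>i<length xs. repeat_mset (\<alpha> i) (xs!i))"
    using WFG by (simp add: W_def G_def n_def)
  ultimately show ?thesis using li balF cF by blast
qed



lemma out_sigma:
  assumes "regular_grammar \<Sigma> S s0 \<delta>" "set_mset D \<subseteq> \<delta>"
  shows "set_mset (out_of D) \<subseteq> \<Sigma>"
proof -
  have "\<forall>\<tau>\<in>\<delta>. set_mset (outp \<tau>) \<subseteq> \<Sigma>" using assms(1)
    unfolding regular_grammar_def comm_grammar_def by blast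
  then show ?thesis using set_out_of[of D] assms(2) by blast
qed

theorem theorem1:
  shows "\<exists>c :: nat. \<forall>\<Sigma> S s0 \<delta> K.
     regular_grammar \<Sigma> S s0 \<delta> \<longrightarrow> set_mset K \<subseteq> \<Sigma> \<longrightarrow>
     (K \<in> out_lang \<delta> s0 \<longleftrightarrow>
       (\<exists>D Cs (\<alpha> :: nat \<Rightarrow> nat).
          is_run \<delta> s0 D \<and>
          mnorm D \<le> c * card S ^ (2 * card \<Sigma>) * fact (card \<Sigma>) \<and>
          (\<forall>C\<in>set Cs. C \<in> simple_cycles_from \<delta> (supp D)) \<and>
          lin_indep Cs \<and>
          K = out_of D + (\<Sum>i<length Cs. repeat_mset (\<alpha> i) (out_of (Cs ! i)))))"
proof (intro exI[of _ 12] allI impI iffI)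
  fix \<Sigma> S s0 \<delta> K
  assume "regular_grammar \<Sigma> S s0 \<delta>" "set_mset K \<subseteq> \<Sigma>"
    "\<exists>D Cs (\<alpha> :: nat \<Rightarrow> nat).
          is_run \<delta> s0 D \<and>
          mnorm D \<le> 12 * card S ^ (2 * card \<Sigma>) * fact (card \<Sigma>) \<and>
          (\<forall>C\<in>set Cs. C \<in> simple_cycles_from \<delta> (supp D)) \<and>
          lin_indep Cs \<and>
          K = out_of D + (\<Sum>i<length Cs. repeat_mset (\<alpha> i) (out_of (Cs ! i)))"
  then show "K \<in> out_lang \<delta> s0" using if_direction by blast
next
  fix \<Sigma> S s0 \<delta> K
  assume G: "regular_grammar \<Sigma> S s0 \<delta>" and KS: "set_mset K \<subseteq> \<Sigma>" and K: "K \<in> out_lang \<delta> s0"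
  obtain R where R: "is_run \<delta> s0 R" "K = out_of R" using K unfolding out_lang_def by blast
  have reg: "\<forall>\<tau>\<in>\<delta>. size (tgt \<tau>) \<le> 1" using reg_of[OF G] .
  have cg: "comm_grammar \<Sigma> S s0 \<delta>" using G by (simp add: regular_grammar_def)
  have fin: "finite \<delta>" "finite \<Sigma>" "finite S" "s0 \<in> S" using cg by (auto simp: comm_grammar_def)
  have cS: "card S \<ge> 1" using fin by (metis One_nat_def Suc_leI card_gt_0_iff empty_iff)
  show "\<exists>D Cs (\<alpha> :: nat \<Rightarrow> nat).
          is_run \<delta> s0 D \<and>
          mnorm D \<le> 12 * card S ^ (2 * card \<Sigma>) * fact (card \<Sigma>) \<and>
          (\<forall>C\<in>set Cs. C \<in> simple_cycles_from \<delta> (supp D)) \<and>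
          lin_indep Cs \<and>
          K = out_of D + (\<Sum>i<length Cs. repeat_mset (\<alpha> i) (out_of (Cs ! i)))"
  proof (cases "card \<Sigma> = 0")
    case True
    then have Se: "\<Sigma> = {}" using fin by simp
    obtain D where D: "is_run \<delta> s0 D" "\<forall>\<tau>. count D \<tau> \<le> 1" using min_run[OF reg R(1)] by blast
    have "mnorm D \<le> 1" using D(2) by (intro mnorm_le) auto
    then have mn: "mnorm D \<le> 12 * card S ^ (2 * card \<Sigma>) * fact (card \<Sigma>)" using True by simp
    have "set_mset (out_of D) \<subseteq> \<Sigma>" using out_sigma[OF G] D(1) by (simp add: is_run_def)
    then have "out_of D = {#}" using Se by simp
    moreover have "K = {#}" using KS Se by simp
    ultimately have KD: "K = out_of D" by simp
    have li: "lin_indep ([]::trans multiset list)" by (simp add: lin_indep_def)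
    show ?thesis
      apply (rule exI[of _ D], rule exI[of _ "[]"], rule exI[of _ "\<lambda>_. 0"])
      using KD li D(1) mn by simp
  next
    case False
    obtain D Cs where D: "is_run \<delta> s0 D" "set_mset D = set_mset R"
      "\<forall>C\<in>set Cs. C \<in> simple_cycles_from \<delta> (supp R) \<and> (\<forall>\<tau>. count C \<tau> \<le> 1)"
      "R = D + sum_list Cs" "\<forall>\<tau>. count D \<tau> \<le> card \<delta> + 2"
      using phase1[OF reg fin(1) R(1)] by blast
    obtain xs \<alpha> F where P: "\<forall>C\<in>set xs. C \<in> simple_cycles_from \<delta> (supp R)" "lin_indep xs"
      "sum_list Cs = F + (\<Sum>i<length xs. repeat_mset (\<alpha> i) (xs!i))"
      "source_of F = target_of F" "\<forall>\<tau>. count F \<tau> \<le> card \<delta>"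
      using phase2[OF fin(1) D(3)] by blast
    define Df where "Df = D + F"
    have "set_mset F \<subseteq> set_mset R" using D(4) P(3) by auto
    then have setDf: "set_mset Df = set_mset D" using D(2) by (auto simp: Df_def)
    have suppDf: "supp Df = supp R" using setDf D(2) by (simp add: supp_eq)
    have runDf: "is_run \<delta> s0 Df"
    proof -
      have "source_of Df = target_of Df + {#s0#}" using D(1) P(4) by (simp add: Df_def is_run_def)
      moreover have "connected_from Df s0" using D(1) setDf connected_from_cong[of D Df s0]
        by (simp add: is_run_def)
      ultimately show ?thesis using setDf D(1) by (simp add: is_run_def)
    qed
    have "\<forall>\<tau>. count Df \<tau> \<le> 2 * (card S * (card \<Sigma> + 1) * (card S + 1)) + 2"
    proof
      fix \<tau>
      have "count D \<tau> \<le> card \<delta> + 2" "count F \<tau> \<le> card \<delta>" using D(5) P(5) by blast+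
      then have "count Df \<tau> \<le> card \<delta> + 2 + card \<delta>" by (simp add: Df_def)
      also have "\<dots> \<le> 2 * (card S * (card \<Sigma> + 1) * (card S + 1)) + 2"
        using card_delta[OF G] by linarith
      finally show "count Df \<tau> \<le> 2 * (card S * (card \<Sigma> + 1) * (card S + 1)) + 2" .
    qed
    then have "mnorm Df \<le> 2 * (card S * (card \<Sigma> + 1) * (card S + 1)) + 2" by (rule mnorm_le)
    also have "\<dots> \<le> 12 * card S ^ (2 * card \<Sigma>) * fact (card \<Sigma>)"
      using arith_bound[OF cS] False by simp
    finally have mn: "mnorm Df \<le> 12 * card S ^ (2 * card \<Sigma>) * fact (card \<Sigma>)" .
    have "K = out_of Df + (\<Sum>i<length xs. repeat_mset (\<alpha> i) (out_of (xs ! i)))"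
      using R(2) D(4) P(3) by (simp add: Df_def out_of_sum add.assoc)
    then show ?thesis using runDf mn P(1,2) suppDf by fastforce
  qed
qed


end
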